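(* For positive integers $n, m$ with $m \le n$ define $$f(n,m) = \sum_{k=0}^{m-1} \binom{n}{k} \left(\frac{m}{n}\right)^k \left(1 - \frac{m}{n}\right)^{n-k}.$$ Then for every integer $n \geq 100$, $f(n,m)$ is an increasing function of $m$ for $1 \le m \leq 11$, i.e. $f(n,1) < f(n,2) < \cdots < f(n,11)$.
   Context: $f(n,m)$ is the probability that a binomial random variable with $n$ trials and success probability $m/n$ is at most $m-1$. *)

theory Defs
  imports Complex_Main
begin

definition f :: "nat \<Rightarrow> nat \<Rightarrow> real" where
  "f n m = (\<Sum>k<m. real (n choose k) * (real m / real n) ^ k * (1 - real m / real n) ^ (n - k))"

end

theory Submission imports Defs begin
definition G :: "nat \<Rightarrow> nat \<Rightarrow> real \<Rightarrow> real" where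
  "G n m x = (\<Sum>k<m. real (n choose k) * x ^ k * (1 - x) ^ (n - k))"

lemma binom_id: "real (Suc i) * real (n choose Suc i) = real (n - i) * real (n choose i)"
proof -
  have "Suc i * (n choose Suc i) = n * ((n - 1) choose i)"
    using times_binomial_minus1_eq[of "Suc i" n] by simp
  also have "\<dots> = (n - i) * (n choose i)" using binomial_absorb_comp[of n i] by simp
  finally show ?thesis by (metis of_nat_mult)
qed

lemma dB: "((\<lambda>x::real. (1-x)^k) has_real_derivative - (real k * (1-x)^(k - 1))) (at x)"
proof -
  have "((\<lambda>x::real. (1-x)^k) has_real_derivative of_nat k * ((0 - 1) * (1-x)^(k - Suc 0))) (at x)"
    by (rule DERIV_power, rule DERIV_diff, rule DERIV_const, rule DERIV_ident)
  then show ?thesis by simp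
qed

lemma dA: "((\<lambda>x::real. x^Suc i) has_real_derivative real (Suc i) * x^i) (at x)"
  using DERIV_pow[of "Suc i" x] by simp

lemma d2: "((\<lambda>x::real. x ^ Suc i * (1 - x) ^ k) has_real_derivative
      (real (Suc i) * x ^ i * (1 - x) ^ k - x ^ Suc i * (real k * (1 - x) ^ (k - 1)))) (at x)"
proof -
  have "((\<lambda>x::real. x ^ Suc i * (1 - x) ^ k) has_real_derivative
      x ^ Suc i * (- (real k * (1-x)^(k - 1))) + (real (Suc i) * x^i) * (1-x)^k) (at x)"
    by (rule DERIV_mult'[OF dA dB])
  then show ?thesis by (simp add: algebra_simps)
qed

lemma G_deriv:
  "i < n \<Longrightarrow> (G n (Suc i) has_real_derivative
     (- (real (n - i) * real (n choose i) * x ^ i * (1 - x) ^ (n - Suc i)))) (at x)"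
proof (induction i)
  case 0
  have e: "G n (Suc 0) = (\<lambda>x. (1 - x) ^ n)" by (auto simp: G_def fun_eq_iff)
  show ?case unfolding e using dB[of n x] by simp
next
  case (Suc i)
  have IH: "(G n (Suc i) has_real_derivative
     (- (real (n - i) * real (n choose i) * x ^ i * (1 - x) ^ (n - Suc i)))) (at x)"
    using Suc by simp
  have e: "G n (Suc (Suc i)) = (\<lambda>x. G n (Suc i) x + real (n choose Suc i) * (x ^ Suc i * (1 - x) ^ (n - Suc i)))"
    by (auto simp: G_def fun_eq_iff)
  have "(G n (Suc (Suc i)) has_real_derivative
     (- (real (n - i) * real (n choose i) * x ^ i * (1 - x) ^ (n - Suc i))) +
     real (n choose Suc i) * (real (Suc i) * x ^ i * (1 - x) ^ (n - Suc i) - x ^ Suc i * (real (n - Suc i) * (1 - x) ^ (n - Suc i - 1)))) (at x)"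
    unfolding e by (intro DERIV_add IH DERIV_cmult d2)
  moreover have "- (real (n - i) * real (n choose i) * x ^ i * (1 - x) ^ (n - Suc i)) +
     real (n choose Suc i) * (real (Suc i) * x ^ i * (1 - x) ^ (n - Suc i) - x ^ Suc i * (real (n - Suc i) * (1 - x) ^ (n - Suc i - 1)))
     = - (real (n - Suc i) * real (n choose Suc i) * x ^ Suc i * (1 - x) ^ (n - Suc (Suc i)))"
  proof -
    have "n - Suc i - 1 = n - Suc (Suc i)" by simp
    moreover have "real (n choose Suc i) * (real (Suc i) * x ^ i * (1 - x) ^ (n - Suc i))
       = (real (Suc i) * real (n choose Suc i)) * (x ^ i * (1 - x) ^ (n - Suc i))" by simp
    ultimately show ?thesis unfolding binom_id[of i n] by (simp add: algebra_simps)
  qed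
  ultimately show ?case by simp
qed

lemma h_dec:
  fixes a z :: real
  assumes "0 \<le> a" "a \<le> z" "z \<le> 1" "1 \<le> M" "real i \<le> real (i + M) * a"
  shows "z ^ i * (1 - z) ^ M \<le> a ^ i * (1 - a) ^ M"
proof (cases i)
  case 0
  then show ?thesis using assms by (simp add: power_mono)
next
  case (Suc j)
  have "(\<lambda>x. x ^ Suc j * (1 - x) ^ M) z \<le> (\<lambda>x. x ^ Suc j * (1 - x) ^ M) a"
  proof (rule DERIV_nonpos_imp_nonincreasing[where f="\<lambda>x. x ^ Suc j * (1 - x) ^ M" and a=a and b=z])
    show "a \<le> z" by fact
    fix x assume x: "a \<le> x" "x \<le> z"
    have P: "0 \<le> x ^ j * (1 - x) ^ (M - 1)" using x assms by simp
    have M: "(1 - x) ^ M = (1 - x) * (1 - x) ^ (M - 1)"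
      using assms(4) by (metis Suc_diff_1 less_le_trans zero_less_one power_Suc)
    have key: "real (Suc j) * (1 - x) \<le> real M * x"
    proof -
      have "real i \<le> real (i + M) * x" using assms x
        by (meson mult_left_mono of_nat_0_le_iff order_trans)
      then show ?thesis using Suc by (simp add: algebra_simps)
    qed
    have "real (Suc j) * x ^ j * (1 - x) ^ M - x ^ Suc j * (real M * (1 - x) ^ (M - 1))
        = (real (Suc j) * (1 - x) - real M * x) * (x ^ j * (1 - x) ^ (M - 1))"
      unfolding M by (simp add: algebra_simps)
    also have "\<dots> \<le> 0" using key P by (simp add: mult_nonpos_nonneg)
    finally show "\<exists>y. ((\<lambda>x. x ^ Suc j * (1 - x) ^ M) has_real_derivative y) (at x) \<and> y \<le> 0"
      using d2[of j M x] by blast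
  qed
  then show ?thesis using Suc by simp
qed

lemma step:
  assumes "0 \<le> a" "a < b" "b \<le> 1" "Suc i < n" "real i \<le> (real n - 1) * a"
  shows "G n (Suc i) a - G n (Suc i) b \<le> (b - a) * (real (n-i) * real (n choose i) * a^i * (1-a)^(n - Suc i))"
proof -
  obtain z where z: "a < z" "z < b" and eq: "G n (Suc i) b - G n (Suc i) a =
      (b - a) * (- (real (n - i) * real (n choose i) * z ^ i * (1 - z) ^ (n - Suc i)))"
    using MVT2[OF assms(2), of "G n (Suc i)"] G_deriv[of i n] assms(4) by force
  have h: "z ^ i * (1 - z) ^ (n - Suc i) \<le> a ^ i * (1 - a) ^ (n - Suc i)"
    apply (rule h_dec)
    using assms z by (auto simp: of_nat_diff)
  have "G n (Suc i) a - G n (Suc i) b = (b - a) * (real (n - i) * real (n choose i)) * (z ^ i * (1 - z) ^ (n - Suc i))"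
    using eq by (simp add: algebra_simps)
  also have "\<dots> \<le> (b - a) * (real (n - i) * real (n choose i)) * (a ^ i * (1 - a) ^ (n - Suc i))"
    using h assms by (intro mult_left_mono) auto
  finally show ?thesis by (simp add: algebra_simps)
qed
lemma num: "i \<le> 9 \<Longrightarrow> (\<Sum>j<10. (real (Suc i)/10) * (real (Suc i) + real j/10)^i * (55321/50000)^(10-j)) < real (Suc (Suc i))^(Suc i)"
  apply (simp add: lessThan_nat_numeral)
  apply (subgoal_tac "i \<in> {0,1,2,3,4,5,6,7,8,9}")
   apply (elim insertE; simp add: power_divide)
  apply auto
  done

lemma exp_ub: "exp (9/89::real) \<le> 55321/50000"
proof -
  obtain t where t: "\<bar>t\<bar> \<le> \<bar>9/89::real\<bar>" and e: "exp (9/89::real) = (\<Sum>m<4. ((9/89) ^ m) / fact m) + (exp t / fact 4) * (9/89) ^ 4"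
    using Maclaurin_exp_le[of "9/89::real" 4] by blast
  have "exp t \<le> exp (9/89::real)" using t by simp
  then have "exp (9/89::real) \<le> (\<Sum>m<4. ((9/89::real) ^ m) / fact m) + (exp (9/89) / fact 4) * (9/89) ^ 4"
    using e by (simp add: divide_right_mono)
  then have "exp (9/89::real) * (1 - (9/89)^4/24) \<le> (\<Sum>m<4. ((9/89::real) ^ m) / fact m)"
    by (simp add: algebra_simps fact_numeral)
  also have "\<dots> \<le> (55321/50000) * (1 - (9/89)^4/24)"
    by (simp add: lessThan_nat_numeral fact_numeral power_divide)
  finally have "exp (9/89::real) * (1 - (9/89)^4/24) \<le> (55321/50000) * (1 - (9/89)^4/24)" .
  moreover have "(0::real) < 1 - (9/89)^4/24" by (simp add: power_divide)
  ultimately show ?thesis by (meson mult_le_cancel_right_pos)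
qed

lemma ratio:
  fixes N j :: nat
  assumes "N \<ge> 90" "j \<le> 10"
  shows "((real N - real j/10)/(real N - 1))^N \<le> (55321/50000)^(10-j)"
proof -
  define d where "d = (1 - real j/10)/(real N - 1)"
  have N1: "real N - 1 > 0" using assms by simp
  have d0: "0 \<le> d" unfolding d_def using assms N1 by simp
  have e1: "(real N - real j/10)/(real N - 1) = 1 + d"
    unfolding d_def using N1 by (simp add: field_simps)
  have "(1 + d)^N \<le> exp d ^ N"
    using d0 by (intro power_mono) auto
  also have "\<dots> = exp (real N * d)" by (simp add: exp_of_nat_mult)
  also have "\<dots> \<le> exp (real (10 - j) * (9/89))"
  proof -
    have a: "0 \<le> 1 - real j/10" using assms by simp
    have b: "real N / (real N - 1) \<le> 90/89" using N1 assms by (simp add: field_simps)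
    have "real N * d = (1 - real j/10) * (real N / (real N - 1))" unfolding d_def by simp
    also have "\<dots> \<le> (1 - real j/10) * (90/89)" by (rule mult_left_mono[OF b a])
    also have "\<dots> = real (10 - j) * (9/89)" using assms by (simp add: of_nat_diff field_simps)
    finally show ?thesis by simp
  qed
  also have "\<dots> = exp (9/89) ^ (10 - j)" by (rule exp_of_nat_mult)
  also have "\<dots> \<le> (55321/50000)^(10-j)" using exp_ub by (intro power_mono) auto
  finally show ?thesis using e1 by simp
qed

theorem lemma4:
  fixes n m :: nat
  assumes "n \<ge> 100" and "1 \<le> m" and "m < 11"
  shows "f n m < f n (Suc m)"
proof -
  obtain i where mi: "m = Suc i" "i \<le> 9" using assms by (cases m) auto
  define N where "N = n - m"
  have N90: "N \<ge> 90" "n = N + m" using assms unfolding N_def by auto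
  have npos: "real n > 0" using assms by simp
  define U :: real where "U = 55321/50000"
  define x where "x j = (real m + real j / 10) / real n" for j :: nat
  define c where "c = real (n - i) * real (n choose i)"
  have cm: "c = real m * real (n choose m)" unfolding c_def mi using binom_id[of i n] by simp
  have x0: "x 0 = real m / real n" unfolding x_def by simp
  have x10: "x 10 = real (Suc m) / real n" unfolding x_def by simp
  have fm: "f n m = G n m (x 0)" by (simp add: f_def G_def x0)
  have fsm: "f n (Suc m) = G n m (x 10) + real (n choose m) * (x 10)^m * (1 - x 10)^N"
    by (simp add: f_def G_def x10 N_def)
  have tele: "G n m (x 0) - G n m (x 10) = (\<Sum>j<10. G n m (x j) - G n m (x (Suc j)))"
    by (rule sum_lessThan_telescope'[symmetric])
  have st: "G n m (x j) - G n m (x (Suc j)) \<le> (1/(10*real n)) * (c * (x j)^i * (1 - x j)^N)"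
    if j: "j < 10" for j
  proof -
    have "G n (Suc i) (x j) - G n (Suc i) (x (Suc j)) \<le> (x (Suc j) - x j) * (real (n-i) * real (n choose i) * (x j)^i * (1 - x j)^(n - Suc i))"
    proof (rule step)
      show "0 \<le> x j" unfolding x_def by simp
      show "x j < x (Suc j)" unfolding x_def using npos by (simp add: divide_strict_right_mono)
      show "x (Suc j) \<le> 1" unfolding x_def using npos j N90 by (simp add: field_simps)
      show "Suc i < n" using N90 mi by simp
      show "real i \<le> (real n - 1) * x j"
      proof -
        have "real i * real n \<le> (real n - 1) * real m" using N90 mi by (simp add: algebra_simps)
        also have "\<dots> \<le> (real n - 1) * (real m + real j / 10)" using N90 by (intro mult_left_mono) auto
        finally show ?thesis unfolding x_def using npos by (simp add: field_simps)
      qed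
    qed
    moreover have "x (Suc j) - x j = 1/(10*real n)" unfolding x_def using npos by (simp add: field_simps)
    ultimately show ?thesis unfolding c_def mi N_def by (simp add: algebra_simps)
  qed
  define K where "K = real (n choose m) * (1 - x 10)^N / real n ^ m"
  have bnd: "(1/(10*real n)) * (c * (x j)^i * (1 - x j)^N) \<le> K * ((real m/10) * (real m + real j/10)^i * U^(10-j))"
    if j: "j < 10" for j
  proof -
    have N1: "real N - 1 > 0" using N90 by simp
    have xj: "x j ^ i = (real m + real j/10)^i / real n ^ i" unfolding x_def by (simp add: power_divide)
    have rn: "real n = real N + real m" using N90 by simp
    have a1: "1 - x j = (real N - real j/10) / real n"
      unfolding x_def using npos by (simp add: field_simps rn)
    have a2: "1 - x 10 = (real N - 1) / real n"
      unfolding x_def using npos by (simp add: field_simps rn)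
    have onex: "1 - x j = (1 - x 10) * ((real N - real j/10)/(real N - 1))"
      unfolding a1 a2 using N1 by simp
    have ge: "0 \<le> 1 - x 10" unfolding x_def using npos N90 by (simp add: field_simps)
    have "(1 - x j)^N = (1 - x 10)^N * ((real N - real j/10)/(real N - 1))^N"
      unfolding onex by (rule power_mult_distrib)
    also have "\<dots> \<le> (1 - x 10)^N * U^(10-j)"
      unfolding U_def using ratio[of N j] N90 j ge by (intro mult_left_mono) auto
    finally have r: "(1 - x j)^N \<le> (1 - x 10)^N * U^(10-j)" .
    have "(1/(10*real n)) * (c * (x j)^i * (1 - x j)^N) = (real m * real (n choose m) / 10) * (real m + real j/10)^i / real n ^ m * (1 - x j)^N"
      unfolding cm xj mi using npos by (simp add: field_simps)
    also have "\<dots> \<le> (real m * real (n choose m) / 10) * (real m + real j/10)^i / real n ^ m * ((1 - x 10)^N * U^(10-j))"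
      using r by (intro mult_left_mono) auto
    also have "\<dots> = K * ((real m/10) * (real m + real j/10)^i * U^(10-j))"
      unfolding K_def by (simp add: field_simps)
    finally show ?thesis .
  qed
  have Kpos: "K > 0"
  proof -
    have "0 < 1 - x 10" unfolding x_def using npos N90 by (simp add: field_simps)
    moreover have "0 < real (n choose m)" using N90 by simp
    ultimately show ?thesis unfolding K_def using npos by simp
  qed
  have "G n m (x 0) - G n m (x 10) \<le> (\<Sum>j<10. K * ((real m/10) * (real m + real j/10)^i * U^(10-j)))"
    unfolding tele by (intro sum_mono order_trans[OF st bnd]) auto
  also have "\<dots> = K * (\<Sum>j<10. (real (Suc i)/10) * (real (Suc i) + real j/10)^i * (55321/50000)^(10-j))"
    unfolding U_def mi by (simp add: sum_distrib_left)
  also have "\<dots> < K * real (Suc (Suc i))^(Suc i)"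
    using num[OF mi(2)] Kpos by (intro mult_strict_left_mono) auto
  also have "\<dots> = real (n choose m) * (x 10)^m * (1 - x 10)^N"
    unfolding K_def x10 mi using npos by (simp add: power_divide)
  finally show ?thesis unfolding fm fsm by simp
qed
end
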